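(* Let $F$ be a field of characteristic $2$ and let $A$ be a quaternion algebra over $F$ with $A\cong[a,b)\cong[\alpha,\beta)$ for some $a,\alpha\in F$, $b,\beta\in F^\times$. Then there exists an element $y\in A$ with $y^2\in F^\times$ such that $A\cong[a,b)\cong[a,y^2)\cong[\alpha,y^2)\cong[\alpha,\beta)$.
   Context: For $\alpha\in F$, $\beta\in F^\times$, $[\alpha,\beta)$ denotes the quaternion algebra $F\langle i,j : i^2+i=\alpha,\ j^2=\beta,\ jij^{-1}=i+1\rangle$. *)

theory Defs
  imports Main
begin

definition F_algebra :: "('f::field \<Rightarrow> 'a::ring_1) \<Rightarrow> bool" where
  "F_algebra emb \<longleftrightarrow> emb 1 = 1 \<and>
     (\<forall>c d. emb (c + d) = emb c + emb d \<and> emb (c * d) = emb c * emb d) \<and>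
     (\<forall>c x. emb c * x = x * emb c)"

text \<open>(i, j) is a standard presentation of the algebra as the quaternion algebra
  [alpha, beta): i^2 + i = alpha, j^2 = beta, j i j^{-1} = i + 1 (equivalently,
  j being invertible as beta is nonzero, j i = (i + 1) j), and 1, i, j, ij is an F-basis.\<close>
definition quat_pres ::
  "('f::field \<Rightarrow> 'a::ring_1) \<Rightarrow> 'f \<Rightarrow> 'f \<Rightarrow> 'a \<Rightarrow> 'a \<Rightarrow> bool" where
  "quat_pres emb \<alpha> \<beta> i j \<longleftrightarrow>
     i * i + i = emb \<alpha> \<and> j * j = emb \<beta> \<and> j * i = (i + 1) * j \<and>
     (\<forall>x. \<exists>!c :: 'f \<times> 'f \<times> 'f \<times> 'f.
        x = emb (fst c) + emb (fst (snd c)) * i + emb (fst (snd (snd c))) * j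
            + emb (snd (snd (snd c))) * (i * j))"

definition iso_quat :: "('f::field \<Rightarrow> 'a::ring_1) \<Rightarrow> 'f \<Rightarrow> 'f \<Rightarrow> bool" where
  "iso_quat emb \<alpha> \<beta> \<longleftrightarrow> (\<exists>i j. quat_pres emb \<alpha> \<beta> i j)"

end

theory Submission
  imports Defs
begin

locale qp =
  fixes emb :: "'f::field \<Rightarrow> 'a::ring_1" and a b :: 'f and i j :: 'a
  assumes alg: "F_algebra emb" and pres: "quat_pres emb a b i j" and ch: "(2::'f) = 0"
begin

lemma emb_add: "emb (c + d) = emb c + emb d" using alg unfolding F_algebra_def by blast
lemma emb_mult: "emb (c * d) = emb c * emb d" using alg unfolding F_algebra_def by blast
lemma emb_comm: "emb c * x = x * emb c" using alg unfolding F_algebra_def by blast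
lemma emb_1: "emb 1 = 1" using alg unfolding F_algebra_def by blast
lemma emb_0: "emb 0 = 0" using emb_add[of 0 0] by simp
lemma emb_minus: "emb (- c) = - emb c"
proof -
  have "emb c + emb (- c) = 0" using emb_add[of c "-c"] emb_0 by simp
  from minus_unique[OF this] show ?thesis by simp
qed
lemma emb_diff: "emb (c - d) = emb c - emb d" using emb_add[of c "-d"] emb_minus by simp
lemma emb_inj: "emb c = 0 \<Longrightarrow> c = 0"
proof (rule ccontr)
  assume "emb c = 0" "c \<noteq> 0"
  have "emb 1 = emb c * emb (inverse c)" using emb_mult[of c "inverse c"] \<open>c \<noteq> 0\<close> by simp
  then have "emb 1 = 0" using \<open>emb c = 0\<close> by simp
  then show False using emb_1 by simp
qed
lemma emb_eq: "emb c = emb d \<Longrightarrow> c = d" using emb_inj[of "c - d"] by (simp add: emb_diff)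

lemma ii: "i * i = emb a - i" using pres unfolding quat_pres_def by (simp add: eq_diff_eq)
lemma jj: "j * j = emb b" using pres unfolding quat_pres_def by simp
lemma ji: "j * i = i * j + j" using pres unfolding quat_pres_def by (simp add: distrib_right)

definition R where "R x0 x1 x2 x3 = emb x0 + emb x1 * i + emb x2 * j + emb x3 * (i * j)"

lemma emb_merge: "emb c * (emb d * x) = emb (c * d) * x"
  by (simp add: emb_mult mult.assoc)
lemmas emb_merge2 = emb_mult[symmetric]
lemma i_emb: "i * emb c = emb c * i" by (simp add: emb_comm)
lemma j_emb: "j * emb c = emb c * j" by (simp add: emb_comm)

lemma R_uniq: "R x0 x1 x2 x3 = R y0 y1 y2 y3 \<Longrightarrow> x0 = y0 \<and> x1 = y1 \<and> x2 = y2 \<and> x3 = y3"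
proof -
  assume h: "R x0 x1 x2 x3 = R y0 y1 y2 y3"
  from pres obtain "\<exists>!c :: 'f \<times> 'f \<times> 'f \<times> 'f.
        R x0 x1 x2 x3 = emb (fst c) + emb (fst (snd c)) * i + emb (fst (snd (snd c))) * j
            + emb (snd (snd (snd c))) * (i * j)" unfolding quat_pres_def by blast
  then have "(x0,x1,x2,x3) = (y0,y1,y2,y3)" using h unfolding R_def
    by (metis (no_types, lifting) fst_conv snd_conv)
  then show ?thesis by simp
qed

lemma R_ex: "\<exists>x0 x1 x2 x3. x = R x0 x1 x2 x3"
proof -
  from pres obtain c :: "'f \<times> 'f \<times> 'f \<times> 'f" where 
        "x = emb (fst c) + emb (fst (snd c)) * i + emb (fst (snd (snd c))) * j
            + emb (snd (snd (snd c))) * (i * j)" unfolding quat_pres_def by blast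
  then show ?thesis unfolding R_def by blast
qed

lemma R_add: "R x0 x1 x2 x3 + R y0 y1 y2 y3 = R (x0+y0) (x1+y1) (x2+y2) (x3+y3)"
  unfolding R_def by (simp add: emb_add algebra_simps)

lemma R_smult: "emb c * R y0 y1 y2 y3 = R (c*y0) (c*y1) (c*y2) (c*y3)"
  unfolding R_def by (simp add: emb_mult algebra_simps)

lemma iR: "i * R y0 y1 y2 y3 = R (a*y1) (y0-y1) (a*y3) (y2-y3)"
proof -
  have c: "\<And>c x. i * (emb c * x) = emb c * (i * x)" by (metis emb_comm mult.assoc)
  have iij: "i * (i * j) = emb a * j - i * j" by (metis ii mult.assoc left_diff_distrib)
  show ?thesis unfolding R_def
    by (simp add: distrib_left c emb_add emb_diff emb_merge emb_merge2 i_emb ii iij algebra_simps)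
qed

lemma jR: "j * R y0 y1 y2 y3 = R (b*y2+b*y3) (b*y3) (y0+y1) y1"
proof -
  have c: "\<And>c x. j * (emb c * x) = emb c * (j * x)" by (metis emb_comm mult.assoc)
  have "j * (i * j) = emb b * i + emb b" 
    by (metis ji jj mult.assoc distrib_right emb_comm) 
  then show ?thesis unfolding R_def
    by (simp add: distrib_left c emb_add emb_diff emb_merge emb_merge2 j_emb ji jj algebra_simps)
qed

lemma R_mult: "R x0 x1 x2 x3 * r = emb x0 * r + emb x1 * (i * r) + emb x2 * (j * r) + emb x3 * (i * (j * r))"
  unfolding R_def by (simp add: algebra_simps)

lemma R_emb: "emb c = R c 0 0 0" unfolding R_def by (simp add: emb_0)
lemma R_i: "i = R 0 1 0 0" unfolding R_def by (simp add: emb_0 emb_1)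
lemma R_j: "j = R 0 0 1 0" unfolding R_def by (simp add: emb_0 emb_1)

lemma R_prod: "R x0 x1 x2 x3 * R y0 y1 y2 y3 =
  R (x0*y0 + x1*a*y1 + x2*(b*y2 + b*y3) + x3*a*b*y3)
    (x0*y1 + x1*(y0 - y1) + x2*b*y3 + x3*b*y2)
    (x0*y2 + x1*a*y3 + x2*(y0 + y1) + x3*a*y1)
    (x0*y3 + x1*(y2 - y3) + x2*y1 + x3*y0)"
  unfolding R_mult iR jR R_smult R_add by (simp add: algebra_simps)

lemma two0: "x + x = (0::'f)"
proof -
  have "x + x = 2 * x" by simp
  then show ?thesis using ch by simp
qed

lemma neg_eq: "- x = (x::'f)" using two0[of x] by (simp add: add_eq_0_iff)

lemma sq_coord1: assumes "R x0 x1 x2 x3 * R x0 x1 x2 x3 = emb e" shows "x1 = 0"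
proof -
  have "x0*x1 + x1*(x0 - x1) + x2*b*x3 + x3*b*x2 = 0"
  proof -
    have "R x0 x1 x2 x3 * R x0 x1 x2 x3 = R e 0 0 0" using assms R_emb[of e] by simp
    then show ?thesis unfolding R_prod using R_uniq by blast
  qed
  moreover have "x0*x1 + x1*(x0 - x1) + x2*b*x3 + x3*b*x2 = 2*(x0*x1 + x2*b*x3) - x1*x1"
    by (simp add: algebra_simps)
  ultimately have "x1 * x1 = 0" using ch by simp
  then show ?thesis by simp
qed

lemma T_sq: "R 0 0 u v * R 0 0 u v = emb (b*(u*u + u*v + a*v*v))"
proof -
  have "R 0 0 u v * R 0 0 u v = R (b*(u*u + u*v + a*v*v)) 0 0 0"
    unfolding R_prod by (simp add: algebra_simps ch)
  then show ?thesis using R_emb[of "b*(u*u + u*v + a*v*v)"] by simp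
qed

lemma rep2: "emb e0 + emb e1 * i + emb e2 * R 0 0 u v + emb e3 * (i * R 0 0 u v)
   = R e0 e1 (e2*u + e3*(a*v)) (e2*v + e3*(u - v))"
proof -
  have "emb e0 + emb e1 * i = R e0 e1 0 0" unfolding R_def by (simp add: emb_0)
  then show ?thesis unfolding iR R_smult by (simp add: R_add algebra_simps)
qed

lemma lemmaP:
  assumes z: "z = R 0 0 u v" and zz: "z * z = emb c" and c: "c \<noteq> 0"
  shows "quat_pres emb a c i z"
proof -
  have "emb c = emb (b*(u*u + u*v + a*v*v))" using zz T_sq z by simp
  then have "c = b*(u*u + u*v + a*v*v)" by (rule emb_eq)
  then have N0: "u*u + u*v + a*v*v \<noteq> 0" using c by auto
  have "u*(u-v) - a*v*v = u*u + u*v + a*v*v - 2*(u*v + a*v*v)" by (simp add: algebra_simps)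
  also have "\<dots> = u*u + u*v + a*v*v" using ch by simp
  finally have De: "u*(u-v) - a*v*v = u*u + u*v + a*v*v" .
  have D: "u*(u-v) - a*v*v \<noteq> 0" by (subst De) (rule N0)
  have r1: "i * i + i = emb a" using pres unfolding quat_pres_def by blast
  have r3: "z * i = (i + 1) * z"
  proof -
    have "z * i = R 0 0 u v * R 0 1 0 0" using z R_i by metis
    also have "\<dots> = R 0 0 (u + a*v) u" unfolding R_prod by (simp add: algebra_simps)
    also have "\<dots> = R 1 1 0 0 * R 0 0 u v" unfolding R_prod by (simp add: algebra_simps)
    also have "R 1 1 0 0 = i + 1" unfolding R_def by (simp add: emb_1 emb_0 add.commute)
    finally show ?thesis using z by simp
  qed
  have r4: "\<forall>x. \<exists>!e :: 'f \<times> 'f \<times> 'f \<times> 'f.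
        x = emb (fst e) + emb (fst (snd e)) * i + emb (fst (snd (snd e))) * z
            + emb (snd (snd (snd e))) * (i * z)"
  proof
    fix x
    obtain d0 d1 d2 d3 where x: "x = R d0 d1 d2 d3" using R_ex by blast
    define e2 where "e2 = (d2*(u-v) - a*v*d3) / (u*(u-v) - a*v*v)"
    define e3 where "e3 = (u*d3 - v*d2) / (u*(u-v) - a*v*v)"
    have e2D: "e2 * (u*(u-v) - a*v*v) = d2*(u-v) - a*v*d3" unfolding e2_def using D by simp
    have e3D: "e3 * (u*(u-v) - a*v*v) = u*d3 - v*d2" unfolding e3_def using D by simp
    have "(e2*u + e3*(a*v)) * (u*(u-v) - a*v*v) = (e2 * (u*(u-v) - a*v*v))*u + (e3 * (u*(u-v) - a*v*v))*(a*v)"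
      by (simp add: algebra_simps)
    also have "\<dots> = d2 * (u*(u-v) - a*v*v)" unfolding e2D e3D by (simp add: algebra_simps)
    finally have E2: "e2*u + e3*(a*v) = d2" using D by simp
    have "(e2*v + e3*(u - v)) * (u*(u-v) - a*v*v) = (e2 * (u*(u-v) - a*v*v))*v + (e3 * (u*(u-v) - a*v*v))*(u-v)"
      by (simp add: algebra_simps)
    also have "\<dots> = d3 * (u*(u-v) - a*v*v)" unfolding e2D e3D by (simp add: algebra_simps)
    finally have E3: "e2*v + e3*(u - v) = d3" using D by simp
    show "\<exists>!e :: 'f \<times> 'f \<times> 'f \<times> 'f.
        x = emb (fst e) + emb (fst (snd e)) * i + emb (fst (snd (snd e))) * z
            + emb (snd (snd (snd e))) * (i * z)"
    proof (rule ex1I[of _ "(d0, d1, e2, e3)"])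
      show "x = emb (fst (d0, d1, e2, e3)) + emb (fst (snd (d0, d1, e2, e3))) * i +
          emb (fst (snd (snd (d0, d1, e2, e3)))) * z + emb (snd (snd (snd (d0, d1, e2, e3)))) * (i * z)"
        using x z rep2 E2 E3 by simp
    next
      fix e :: "'f \<times> 'f \<times> 'f \<times> 'f"
      obtain f0 f1 f2 f3 where e: "e = (f0, f1, f2, f3)" by (cases e) auto
      assume "x = emb (fst e) + emb (fst (snd e)) * i + emb (fst (snd (snd e))) * z
            + emb (snd (snd (snd e))) * (i * z)"
      then have "R d0 d1 d2 d3 = R f0 f1 (f2*u + f3*(a*v)) (f2*v + f3*(u - v))"
        using x z e rep2 by simp
      then have h: "d0 = f0" "d1 = f1" "f2*u + f3*(a*v) = d2" "f2*v + f3*(u - v) = d3"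
        using R_uniq by metis+
      have g1: "(f2 - e2)*u + (f3 - e3)*(a*v) = 0" using h(3) E2 by (simp add: algebra_simps)
      have g2: "(f2 - e2)*v + (f3 - e3)*(u - v) = 0" using h(4) E3 by (simp add: algebra_simps)
      have "(f2 - e2) * (u*(u-v) - a*v*v) = (u - v) * ((f2 - e2)*u + (f3 - e3)*(a*v)) - a*v*((f2 - e2)*v + (f3 - e3)*(u - v))"
        by (simp add: algebra_simps)
      then have "(f2 - e2) * (u*(u-v) - a*v*v) = 0" using g1 g2 by simp
      then have f2: "f2 = e2" using D by simp
      have "(f3 - e3) * (u*(u-v) - a*v*v) = u * ((f2 - e2)*v + (f3 - e3)*(u - v)) - v*((f2 - e2)*u + (f3 - e3)*(a*v))"
        by (simp add: algebra_simps)
      then have "(f3 - e3) * (u*(u-v) - a*v*v) = 0" using g1 g2 by simp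
      then have f3: "f3 = e3" using D by simp
      show "e = (d0, d1, e2, e3)" using e h f2 f3 by simp
    qed
  qed
  show ?thesis unfolding quat_pres_def using r1 zz r3 r4 by blast
qed

lemma lemmaQ:
  assumes b: "b \<noteq> 0" and uv: "(u, v) \<noteq> (0, 0)" and sq: "R 0 0 u v * R 0 0 u v = 0"
  shows "\<exists>u' v'. R 0 0 u' v' * R 0 0 u' v' = emb 1"
proof -
  have "emb (b*(u*u + u*v + a*v*v)) = 0" using sq T_sq by simp
  then have "b*(u*u + u*v + a*v*v) = 0" by (rule emb_inj)
  then have N: "u*u + u*v + a*v*v = 0" using b by simp
  have v: "v \<noteq> 0"
  proof
    assume "v = 0"
    then have "u * u = 0" using N by simp
    then show False using uv \<open>v = 0\<close> by simp
  qed
  define t where "t = u / v"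
  have "(t*t + t + a) * (v*v) = u*u + u*v + a*v*v" unfolding t_def using v
    by (simp add: field_simps)
  then have T: "t*t + t + a = 0" using N v by simp
  define d where "d = inverse b"
  define v' where "v' = 1 + d"
  define u' where "u' = d + t*v'"
  have "u'*u' + u'*v' + a*v'*v' = d*d + d*v' + (t*t + t + a)*(v'*v') + 2*(d*t*v')"
    unfolding u'_def by (simp add: algebra_simps)
  also have "\<dots> = d*d + d*v'" using T ch by simp
  also have "\<dots> = d + (d*d + d*d)" unfolding v'_def by (simp add: algebra_simps)
  also have "\<dots> = d" using two0 by simp
  finally have "b*(u'*u' + u'*v' + a*v'*v') = 1" using b unfolding d_def by simp
  then show ?thesis using T_sq by metis
qed

end

theorem lemma4:
  fixes emb :: "'f::field \<Rightarrow> 'a::ring_1"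
    and a b \<alpha> \<beta> :: 'f
  assumes "CHAR('f) = 2"
    and "F_algebra emb"
    and "b \<noteq> 0" and "\<beta> \<noteq> 0"
    and "iso_quat emb a b"
    and "iso_quat emb \<alpha> \<beta>"
  shows "\<exists>y :: 'a. \<exists>c :: 'f. c \<noteq> 0 \<and> y * y = emb c \<and>
           iso_quat emb a b \<and> iso_quat emb a c \<and> iso_quat emb \<alpha> c \<and> iso_quat emb \<alpha> \<beta>"
proof -
  have ch: "(2::'f) = 0" using of_nat_CHAR[where 'a='f] assms(1) by simp
  obtain i j where p1: "quat_pres emb a b i j" using assms(5) unfolding iso_quat_def by blast
  obtain i' j' where p2: "quat_pres emb \<alpha> \<beta> i' j'" using assms(6) unfolding iso_quat_def by blast
  interpret P1: qp emb a b i j using assms(2) p1 ch by unfold_locales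
  interpret P2: qp emb \<alpha> \<beta> i' j' using assms(2) p2 ch by unfold_locales
  obtain d0 d1 d2 d3 where jd: "j' = P1.R d0 d1 d2 d3" using P1.R_ex by blast
  obtain f0 f1 f2 f3 where ijd: "i' * j' = P1.R f0 f1 f2 f3" using P1.R_ex by blast
  define p where "p = (if d0 = 0 \<and> f0 = 0 then 1 else f0)"
  define q where "q = (if d0 = 0 \<and> f0 = 0 then 0 else - d0)"
  have pq0: "p * d0 + q * f0 = 0" unfolding p_def q_def by (simp add: algebra_simps)
  have pq: "(p, q) \<noteq> (0, 0)" unfolding p_def q_def by auto
  define y where "y = P2.R 0 0 p q"
  have y2: "y = emb p * j' + emb q * (i' * j')" unfolding y_def P2.R_def by (simp add: P2.emb_0)
  have y1: "y = P1.R 0 (p*d1 + q*f1) (p*d2 + q*f2) (p*d3 + q*f3)"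
  proof -
    have "y = emb p * P1.R d0 d1 d2 d3 + emb q * P1.R f0 f1 f2 f3"
      unfolding y2 by (subst ijd) (subst jd, rule refl)
    then show ?thesis unfolding P1.R_smult P1.R_add using pq0 by simp
  qed
  define c where "c = \<beta>*(p*p + p*q + \<alpha>*q*q)"
  have yy: "y * y = emb c" unfolding y_def c_def by (rule P2.T_sq)
  have "p*d1 + q*f1 = 0" using P1.sq_coord1 yy y1 by metis
  then have y1': "y = P1.R 0 0 (p*d2 + q*f2) (p*d3 + q*f3)" using y1 by simp
  have ynz: "y \<noteq> 0"
  proof
    assume "y = 0"
    then have "P2.R 0 0 p q = P2.R 0 0 0 0" unfolding y_def P2.R_def by (simp add: P2.emb_0)
    then show False using P2.R_uniq pq by blast
  qed
  have g: "(p*d2 + q*f2, p*d3 + q*f3) \<noteq> (0, 0)"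
  proof
    assume "(p*d2 + q*f2, p*d3 + q*f3) = (0, 0)"
    then have "y = 0" using y1' unfolding P1.R_def by (simp add: P1.emb_0)
    then show False using ynz by simp
  qed
  show ?thesis
  proof (cases "c = 0")
    case False
    have "quat_pres emb a c i y" using P1.lemmaP[OF y1' yy False] .
    moreover have "quat_pres emb \<alpha> c i' y" using P2.lemmaP[OF y_def yy False] .
    ultimately show ?thesis using yy False assms(5,6) unfolding iso_quat_def by blast
  next
    case True
    then have yy0: "y * y = 0" using yy P1.emb_0 by simp
    obtain u v where uv: "P1.R 0 0 u v * P1.R 0 0 u v = emb 1"
      using P1.lemmaQ[OF assms(3) g] yy0 y1' by metis
    obtain u' v' where uv': "P2.R 0 0 u' v' * P2.R 0 0 u' v' = emb 1"
      using P2.lemmaQ[OF assms(4) pq] yy0 y_def by metis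
    have "quat_pres emb a 1 i (P1.R 0 0 u v)" using P1.lemmaP[OF refl uv] by simp
    moreover have "quat_pres emb \<alpha> 1 i' (P2.R 0 0 u' v')" using P2.lemmaP[OF refl uv'] by simp
    ultimately show ?thesis using uv assms(5,6) unfolding iso_quat_def
      by (metis one_neq_zero)
  qed
qed

end
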